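(* Consider an inventory system as in the context, and suppose in addition that $G$ is twice differentiable on $(0,\infty)$ with $l\le G''(y)\le L$ for all $y>0$, for constants $0<l\le L$. Let $$M=\frac{\Delta+\sum_{k=0}^{N-1}\mu_k}{N},\qquad u=\mathrm{LS}(\mu_0+\Delta,\mu_1,\dots,\mu_{N-1}),$$ $$S_u=\sum_{k=0}^{N-1}(u_k-M)^2,\qquad S_\mu=(\mu_0+\Delta-M)^2+\sum_{k=1}^{N-1}(\mu_k-M)^2.$$ Then $$J_{\pi^{\mathrm{my}}}(0)-J^*(0)\ \ge\ \frac{l}{2}\Big(S_\mu+\sum_{k=0}^{N-2}\sigma_k^2\Big)-\frac{L}{2}\Big(S_u+\sum_{k=0}^{N-2}\sigma_k^2\Big).$$
   Context: Inventory system: $N\ge1$; $G:\mathbb{R}_{\ge0}\to\mathbb{R}_{\ge0}$ is strictly convex and increasing with $G(0)=0$. Demands $w_0,\dots,w_{N-1}$ are independent random variables; $w_k$ has mean $\mu_k$, variance $\sigma_k^2$, and support exactly $[\mu_k-\Delta,\mu_k+\Delta]$, where $\Delta\ge0$ and $\mu_k-\Delta>0$ for all $k$. A (Markov) policy is a sequence $\pi=(\pi_0,\dots,\pi_{N-1})$ of measurable maps $\pi_k:\mathbb{R}_{\ge0}\to\mathbb{R}_{\ge0}$; the state evolves by $x_0=0$, $x_{k+1}=x_k+\pi_k(x_k)-w_k$. A policy is admissible if $x_k\ge0$ almost surely for all $k\in\{1,\dots,N\}$. Its expected cost is $J_\pi(0)=\sum_{k=0}^{N-1}\mathbb{E}[G(\pi_k(x_k))]$,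 and $J^*(0)$ denotes the infimum of $J_\pi(0)$ over admissible policies (the optimal cost). The myopic policy is $\pi^{\mathrm{my}}_k(x)=\max\{0,\mu_k+\Delta-x\}$. Block-averaging procedure $\mathrm{LS}$: given a finite sequence $v=(v_0,\dots,v_{N-1})$ of positive reals, define indices $0=k_0<k_1<\dots<k_n=N$ recursively: if $k_l<N$, let $k_{l+1}=k_l+j^*$, where $j^*$ is the largest element of $\arg\max_{j\in\{1,\dots,N-k_l\}}\frac{1}{j}\sum_{i=k_l}^{k_l+j-1}v_i$; stop when $k_n=N$. Then $\mathrm{LS}(v)=(u_0,\dots,u_{N-1})$ with $u_i=\frac{1}{k_{l+1}-k_l}\sum_{m=k_l}^{k_{l+1}-1}v_m$ for $k_l\le i<k_{l+1}$. *)

theory Defs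
  imports "HOL-Probability.Probability"
begin

definition strictly_convex_on :: "real set \<Rightarrow> (real \<Rightarrow> real) \<Rightarrow> bool" where
  "strictly_convex_on S f \<longleftrightarrow>
     (\<forall>x\<in>S. \<forall>y\<in>S. \<forall>t. x \<noteq> y \<and> 0 < t \<and> t < 1 \<longrightarrow>
        f (t * x + (1 - t) * y) < t * f x + (1 - t) * f y)"

definition rv_support :: "'a measure \<Rightarrow> ('a \<Rightarrow> real) \<Rightarrow> real set" where
  "rv_support M X = {x. \<forall>e>0. measure M {\<omega> \<in> space M. \<bar>X \<omega> - x\<bar> < e} > 0}"

fun state :: "(nat \<Rightarrow> real \<Rightarrow> real) \<Rightarrow> (nat \<Rightarrow> 'a \<Rightarrow> real) \<Rightarrow> nat \<Rightarrow> 'a \<Rightarrow> real" where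
  "state \<pi> w 0 \<omega> = 0"
| "state \<pi> w (Suc k) \<omega> = state \<pi> w k \<omega> + \<pi> k (state \<pi> w k \<omega>) - w k \<omega>"

text \<open>Policies: measurable maps with nonnegative values (the value at negative
  arguments is a harmless convention, only ever used on null sets).\<close>
definition is_policy :: "nat \<Rightarrow> (nat \<Rightarrow> real \<Rightarrow> real) \<Rightarrow> bool" where
  "is_policy N \<pi> \<longleftrightarrow> (\<forall>k<N. \<pi> k \<in> borel_measurable borel \<and> (\<forall>x. 0 \<le> \<pi> k x))"

definition admissible :: "'a measure \<Rightarrow> (nat \<Rightarrow> 'a \<Rightarrow> real) \<Rightarrow> nat \<Rightarrow> (nat \<Rightarrow> real \<Rightarrow> real) \<Rightarrow> bool" where
  "admissible M w N \<pi> \<longleftrightarrow> is_policy N \<pi> \<and>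
     (\<forall>k\<in>{1..N}. AE \<omega> in M. 0 \<le> state \<pi> w k \<omega>)"

definition cost :: "'a measure \<Rightarrow> (real \<Rightarrow> real) \<Rightarrow> (nat \<Rightarrow> 'a \<Rightarrow> real) \<Rightarrow> nat
     \<Rightarrow> (nat \<Rightarrow> real \<Rightarrow> real) \<Rightarrow> ennreal" where
  "cost M G w N \<pi> = (\<Sum>k<N. \<integral>\<^sup>+ \<omega>. ennreal (G (\<pi> k (state \<pi> w k \<omega>))) \<partial>M)"

definition opt_cost :: "'a measure \<Rightarrow> (real \<Rightarrow> real) \<Rightarrow> (nat \<Rightarrow> 'a \<Rightarrow> real) \<Rightarrow> nat \<Rightarrow> ennreal" where
  "opt_cost M G w N = (INF \<pi> \<in> {\<pi>. admissible M w N \<pi>}. cost M G w N \<pi>)"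

definition myopic :: "(nat \<Rightarrow> real) \<Rightarrow> real \<Rightarrow> nat \<Rightarrow> real \<Rightarrow> real" where
  "myopic \<mu> \<Delta> k x = max 0 (\<mu> k + \<Delta> - x)"

definition avg :: "(nat \<Rightarrow> real) \<Rightarrow> nat \<Rightarrow> nat \<Rightarrow> real" where
  "avg v a j = (\<Sum>i = a..<a + j. v i) / real j"

definition blk :: "(nat \<Rightarrow> real) \<Rightarrow> nat \<Rightarrow> nat \<Rightarrow> nat" where
  "blk v N a = (GREATEST j. j \<in> {1..N - a} \<and> (\<forall>i\<in>{1..N - a}. avg v a i \<le> avg v a j))"

fun brk :: "(nat \<Rightarrow> real) \<Rightarrow> nat \<Rightarrow> nat \<Rightarrow> nat" where
  "brk v N 0 = 0"
| "brk v N (Suc l) = (if brk v N l < N then brk v N l + blk v N (brk v N l) else brk v N l)"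

definition LS :: "(nat \<Rightarrow> real) \<Rightarrow> nat \<Rightarrow> nat \<Rightarrow> real" where
  "LS v N i = (let l = (LEAST l. i < brk v N (Suc l))
               in avg v (brk v N l) (brk v N (Suc l) - brk v N l))"

end

theory Submission
  imports Defs
begin

lemma blk_props:
  assumes "a < N"
  shows "1 \<le> blk v N a \<and> blk v N a \<le> N - a \<and> (\<forall>i\<in>{1..N - a}. avg v a i \<le> avg v a (blk v N a))"
proof -
  let ?S = "{1..N-a}"
  have fin: "finite (avg v a ` ?S)" and ne: "avg v a ` ?S \<noteq> {}" using assms by auto
  obtain j where j: "j \<in> ?S" "avg v a j = Max (avg v a ` ?S)"
    using Max_in[OF fin ne] by auto
  have P: "j \<in> ?S \<and> (\<forall>i\<in>?S. avg v a i \<le> avg v a j)"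
    using j fin by auto
  have "(\<lambda>j. j \<in> ?S \<and> (\<forall>i\<in>?S. avg v a i \<le> avg v a j)) (blk v N a)"
    unfolding blk_def
    by (rule GreatestI_nat[where k=j and b="N-a"]) (use P in auto)
  then show ?thesis by auto
qed

lemma brk_le: "brk v N l \<le> N"
  by (induction l) (auto dest: blk_props[of _ N v])

lemma brk_ge: "min l N \<le> brk v N l"
proof (induction l)
  case (Suc l)
  show ?case
  proof (cases "brk v N l < N")
    case True
    then show ?thesis using Suc blk_props[OF True, of v] by auto
  next
    case False
    then show ?thesis using brk_le[of v N l] by auto
  qed
qed simp

lemma brk_Suc_mono: "brk v N l \<le> brk v N (Suc l)"
  by auto

lemma brk_mono: "l \<le> l' \<Longrightarrow> brk v N l \<le> brk v N l'"
  by (induction l' rule: dec_induct) (auto intro: order_trans[OF _ brk_Suc_mono])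

lemma brk_step: "brk v N l < brk v N (Suc l) \<Longrightarrow> brk v N l < N \<and> brk v N (Suc l) = brk v N l + blk v N (brk v N l)"
  by (auto split: if_splits)

lemma LS_block:
  assumes "brk v N l \<le> i" "i < brk v N (Suc l)"
  shows "LS v N i = avg v (brk v N l) (brk v N (Suc l) - brk v N l)"
proof -
  have "(LEAST l. i < brk v N (Suc l)) = l"
  proof (rule Least_equality)
    show "i < brk v N (Suc l)" by fact
    fix y assume y: "i < brk v N (Suc y)"
    show "l \<le> y"
    proof (rule ccontr)
      assume "\<not> l \<le> y" then have "Suc y \<le> l" by simp
      then have "brk v N (Suc y) \<le> brk v N l" by (rule brk_mono)
      then show False using y assms by simp
    qed
  qed
  then show ?thesis unfolding LS_def Let_def by simp
qed

lemma brk_locate: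
  assumes "i < N"
  obtains l where "brk v N l \<le> i" "i < brk v N (Suc l)"
proof -
  have ex: "\<exists>l. i < brk v N (Suc l)"
    using brk_ge[of "Suc N" N v] assms by (intro exI[of _ N]) auto
  define l where "l = (LEAST l. i < brk v N (Suc l))"
  have 1: "i < brk v N (Suc l)" unfolding l_def by (rule LeastI_ex[OF ex])
  have 2: "brk v N l \<le> i"
  proof (cases l)
    case 0 then show ?thesis by simp
  next
    case (Suc l')
    have "\<not> i < brk v N (Suc l')"
    proof
      assume "i < brk v N (Suc l')"
      then have "l \<le> l'" unfolding l_def by (rule Least_le)
      then show False using Suc by simp
    qed
    then show ?thesis using Suc by simp
  qed
  show ?thesis by (rule that[OF 2 1])
qed

lemma avg_sum: "j \<ge> 1 \<Longrightarrow> (\<Sum>i = a..<a + j. v i) = real j * avg v a j"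
  unfolding avg_def by simp

lemma block_sum:
  assumes "brk v N l < N"
  shows "(\<Sum>i = brk v N l..<brk v N (Suc l). LS v N i) = (\<Sum>i = brk v N l..<brk v N (Suc l). v i)"
proof -
  let ?a = "brk v N l" let ?j = "blk v N (brk v N l)"
  have bp: "1 \<le> ?j" using blk_props[OF assms] by auto
  have eq: "brk v N (Suc l) = ?a + ?j" using assms by simp
  have "(\<Sum>i = ?a..<brk v N (Suc l). LS v N i) = (\<Sum>i = ?a..<brk v N (Suc l). avg v ?a ?j)"
  proof (rule sum.cong[OF refl])
    fix i assume "i \<in> {?a..<brk v N (Suc l)}"
    then show "LS v N i = avg v ?a ?j" using LS_block[of v N l i] eq by auto
  qed
  also have "\<dots> = (\<Sum>i = ?a..<?a + ?j. avg v ?a ?j)" using eq by simp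
  also have "\<dots> = real ?j * avg v ?a ?j" by simp
  also have "\<dots> = (\<Sum>i = ?a..<?a + ?j. v i)" using avg_sum[OF bp] by simp
  finally show ?thesis using eq by simp
qed

lemma brk_sum: "(\<Sum>i<brk v N l. LS v N i) = (\<Sum>i<brk v N l. v i)"
proof (induction l)
  case (Suc l)
  show ?case
  proof (cases "brk v N l < N")
    case True
    have le: "brk v N l \<le> brk v N (Suc l)" by (rule brk_Suc_mono)
    have "(\<Sum>i<brk v N (Suc l). LS v N i) = (\<Sum>i<brk v N l. LS v N i) + (\<Sum>i = brk v N l..<brk v N (Suc l). LS v N i)"
      using le by (metis atLeast0LessThan le0 sum.atLeastLessThan_concat)
    also have "\<dots> = (\<Sum>i<brk v N l. v i) + (\<Sum>i = brk v N l..<brk v N (Suc l). v i)"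
      using Suc block_sum[OF True] by simp
    also have "\<dots> = (\<Sum>i<brk v N (Suc l). v i)"
      using le by (metis atLeast0LessThan le0 sum.atLeastLessThan_concat)
    finally show ?thesis .
  next
    case False then show ?thesis using Suc by simp
  qed
qed simp

lemma LS_total: "(\<Sum>i<N. LS v N i) = (\<Sum>i<N. v i)"
proof -
  have "brk v N N = N" using brk_le[of v N N] brk_ge[of N N v] by simp
  then show ?thesis using brk_sum[of v N N] by simp
qed

lemma LS_prefix:
  assumes "k \<le> N"
  shows "(\<Sum>i<k. v i) \<le> (\<Sum>i<k. LS v N i)"
proof (cases "k = N")
  case True then show ?thesis using LS_total by simp
next
  case False
  then have kN: "k < N" using assms by simp
  obtain l where l: "brk v N l \<le> k" "k < brk v N (Suc l)" by (rule brk_locate[OF kN])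
  let ?a = "brk v N l" let ?j = "blk v N (brk v N l)"
  have aN: "?a < N" using l kN by simp
  have bp: "1 \<le> ?j" "?j \<le> N - ?a" "\<forall>i\<in>{1..N - ?a}. avg v ?a i \<le> avg v ?a ?j" using blk_props[OF aN] by auto
  have eq: "brk v N (Suc l) = ?a + ?j" using aN by simp
  have s1: "(\<Sum>i<k. LS v N i) = (\<Sum>i<?a. LS v N i) + (\<Sum>i = ?a..<k. LS v N i)"
    using l by (metis atLeast0LessThan le0 sum.atLeastLessThan_concat)
  have s2: "(\<Sum>i<k. v i) = (\<Sum>i<?a. v i) + (\<Sum>i = ?a..<k. v i)"
    using l by (metis atLeast0LessThan le0 sum.atLeastLessThan_concat)
  have s3: "(\<Sum>i = ?a..<k. LS v N i) = (\<Sum>i = ?a..<k. avg v ?a ?j)"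
    apply (rule sum.cong[OF refl])
    apply (subst LS_block[of v N l])
    using eq l by auto
  have s4: "(\<Sum>i = ?a..<k. v i) \<le> (\<Sum>i = ?a..<k. avg v ?a ?j)"
  proof (cases "k = ?a")
    case True then show ?thesis by simp
  next
    case False
    define m where "m = k - ?a"
    have m: "1 \<le> m" "m \<le> N - ?a" "k = ?a + m" using False l kN unfolding m_def by auto
    have "(\<Sum>i = ?a..<k. v i) = real m * avg v ?a m" using avg_sum[OF m(1)] m(3) by simp
    also have "\<dots> \<le> real m * avg v ?a ?j" using bp(3) m by (intro mult_left_mono) auto
    also have "\<dots> = (\<Sum>i = ?a..<k. avg v ?a ?j)" using m by simp
    finally show ?thesis .
  qed
  show ?thesis using s1 s2 s3 s4 brk_sum[of v N l] by simp
qed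

lemma LS_lower:
  assumes "i < N" "\<And>i. i < N \<Longrightarrow> c < v i"
  shows "c < LS v N i"
proof -
  obtain l where l: "brk v N l \<le> i" "i < brk v N (Suc l)" by (rule brk_locate[OF assms(1)])
  let ?a = "brk v N l" let ?j = "blk v N (brk v N l)"
  have aN: "?a < N" using l assms by simp
  have bp: "1 \<le> ?j" "?j \<le> N - ?a" using blk_props[OF aN] by auto
  have eq: "brk v N (Suc l) = ?a + ?j" using aN by simp
  have "real ?j * c = (\<Sum>i = ?a..<?a + ?j. c)" by simp
  also have "\<dots> < (\<Sum>i = ?a..<?a + ?j. v i)"
    using bp by (intro sum_strict_mono) (auto intro: assms(2))
  finally have "real ?j * c < real ?j * avg v ?a ?j" using avg_sum[OF bp(1)] by simp
  then have "c < avg v ?a ?j" using bp by simp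
  then show ?thesis using LS_block[OF l] eq by simp
qed


lemma support_AE:
  assumes P: "prob_space M" and X: "X \<in> borel_measurable M"
  shows "AE \<omega> in M. X \<omega> \<in> rv_support M X"
proof -
  interpret prob_space M by fact
  define I where "I = {(p,r). p \<in> \<rat> \<and> r \<in> \<rat> \<and> measure M {\<omega> \<in> space M. p < X \<omega> \<and> X \<omega> < r} = 0}"
  define A where "A = (\<lambda>(p,r). {\<omega> \<in> space M. p < X \<omega> \<and> X \<omega> < r})"
  have cI: "countable I"
    by (rule countable_subset[of _ "\<rat> \<times> \<rat>"]) (auto simp: I_def countable_rat)
  have nI: "\<forall>i\<in>I. A i \<in> null_sets M"
  proof
    fix i assume "i \<in> I"
    then obtain p r where i: "i = (p,r)" "measure M {\<omega> \<in> space M. p < X \<omega> \<and> X \<omega> < r} = 0"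
      unfolding I_def by auto
    have s: "{\<omega> \<in> space M. p < X \<omega> \<and> X \<omega> < r} \<in> sets M" using X by measurable
    show "A i \<in> null_sets M" using i s by (simp add: A_def null_sets_def emeasure_eq_measure)
  qed
  have nU: "(\<Union>i\<in>I. A i) \<in> null_sets M" using null_sets_UN'[OF cI] nI by blast
  show ?thesis
  proof (rule AE_I'[OF nU], safe)
    fix \<omega> assume w: "\<omega> \<in> space M" "X \<omega> \<notin> rv_support M X"
    let ?y = "X \<omega>"
    obtain e where e: "e > 0" "\<not> measure M {\<omega> \<in> space M. \<bar>X \<omega> - ?y\<bar> < e} > 0"
      using w(2) unfolding rv_support_def by auto
    obtain p where p: "p \<in> \<rat>" "?y - e < p" "p < ?y" using Rats_dense_in_real[of "?y - e" ?y] e by auto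
    obtain r where r: "r \<in> \<rat>" "?y < r" "r < ?y + e" using Rats_dense_in_real[of ?y "?y + e"] e by auto
    have sub: "{\<omega> \<in> space M. p < X \<omega> \<and> X \<omega> < r} \<subseteq> {\<omega> \<in> space M. \<bar>X \<omega> - ?y\<bar> < e}"
      using p r by auto
    have s2: "{\<omega> \<in> space M. \<bar>X \<omega> - ?y\<bar> < e} \<in> sets M" using X by measurable
    have "measure M {\<omega> \<in> space M. p < X \<omega> \<and> X \<omega> < r} \<le> measure M {\<omega> \<in> space M. \<bar>X \<omega> - ?y\<bar> < e}"
      by (rule finite_measure_mono[OF sub s2])
    then have "measure M {\<omega> \<in> space M. p < X \<omega> \<and> X \<omega> < r} = 0"
      using e(2) measure_nonneg[of M "{\<omega> \<in> space M. p < X \<omega> \<and> X \<omega> < r}"] by linarith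
    then have "(p,r) \<in> I" using p r unfolding I_def by auto
    moreover have "\<omega> \<in> A (p,r)" using w p r unfolding A_def by auto
    ultimately show "\<omega> \<in> (\<Union>i\<in>I. A i)" by auto
  qed
qed

lemma convex_tangent:
  fixes F F' F'' :: "real \<Rightarrow> real"
  assumes d1: "\<And>y. y > 0 \<Longrightarrow> (F has_real_derivative F' y) (at y)"
    and d2: "\<And>y. y > 0 \<Longrightarrow> (F' has_real_derivative F'' y) (at y)"
    and pos: "\<And>y. y > 0 \<Longrightarrow> 0 \<le> F'' y"
    and x: "x > 0" and m: "m > 0"
  shows "F m + F' m * (x - m) \<le> F x"
proof -
  define h where "h = (\<lambda>x. F x - F m - F' m * (x - m))"
  have dh: "(h has_real_derivative (F' y - F' m)) (at y)" if "y > 0" for y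
    unfolding h_def using d1[OF that] by (auto intro!: derivative_eq_intros)
  have F'mono: "F' a \<le> F' b" if "0 < a" "a \<le> b" for a b
  proof (rule DERIV_nonneg_imp_nondecreasing[OF that(2)])
    fix t assume "a \<le> t" "t \<le> b"
    then have "t > 0" using that by simp
    then show "\<exists>y. (F' has_real_derivative y) (at t) \<and> 0 \<le> y" using d2 pos by blast
  qed
  have "h m \<le> h x" if "m \<le> x"
  proof (rule DERIV_nonneg_imp_nondecreasing[OF that])
    fix t assume "m \<le> t" "t \<le> x"
    then show "\<exists>y. (h has_real_derivative y) (at t) \<and> 0 \<le> y"
      using dh[of t] F'mono[of m t] m by auto
  qed
  moreover have "h m \<le> h x" if "x \<le> m"
  proof (rule DERIV_nonpos_imp_nonincreasing[OF that])
    fix t assume "x \<le> t" "t \<le> m"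
    then show "\<exists>y. (h has_real_derivative y) (at t) \<and> y \<le> 0"
      using dh[of t] F'mono[of t m] x by auto
  qed
  ultimately have "h m \<le> h x" by linarith
  then show ?thesis unfolding h_def by simp
qed


lemma quad_bounds:
  fixes G G' G'' :: "real \<Rightarrow> real"
  assumes d1: "\<And>y. y > 0 \<Longrightarrow> (G has_real_derivative G' y) (at y)"
    and d2: "\<And>y. y > 0 \<Longrightarrow> (G' has_real_derivative G'' y) (at y)"
    and b: "\<And>y. y > 0 \<Longrightarrow> l \<le> G'' y \<and> G'' y \<le> L"
    and x: "x > 0" and m: "m > 0"
  shows "G m + G' m * (x - m) + l / 2 * (x - m)\<^sup>2 \<le> G x"
    and "G x \<le> G m + G' m * (x - m) + L / 2 * (x - m)\<^sup>2"
proof -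
  have "(\<lambda>x. G x - l/2 * x\<^sup>2) m + (\<lambda>x. G' x - l * x) m * (x - m) \<le> (\<lambda>x. G x - l/2 * x\<^sup>2) x"
  proof (rule convex_tangent[where F''="\<lambda>x. G'' x - l"])
    fix y :: real assume y: "y > 0"
    show "((\<lambda>x. G x - l/2 * x\<^sup>2) has_real_derivative G' y - l * y) (at y)"
      using d1[OF y] by (auto intro!: derivative_eq_intros)
    show "((\<lambda>x. G' x - l * x) has_real_derivative G'' y - l) (at y)"
      using d2[OF y] by (auto intro!: derivative_eq_intros)
    show "0 \<le> G'' y - l" using b[OF y] by simp
  qed (use x m in auto)
  then show "G m + G' m * (x - m) + l / 2 * (x - m)\<^sup>2 \<le> G x"
    by (simp add: power2_eq_square algebra_simps)
  have "(\<lambda>x. L/2 * x\<^sup>2 - G x) m + (\<lambda>x. L * x - G' x) m * (x - m) \<le> (\<lambda>x. L/2 * x\<^sup>2 - G x) x"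
  proof (rule convex_tangent[where F''="\<lambda>x. L - G'' x"])
    fix y :: real assume y: "y > 0"
    show "((\<lambda>x. L/2 * x\<^sup>2 - G x) has_real_derivative L * y - G' y) (at y)"
      using d1[OF y] by (auto intro!: derivative_eq_intros)
    show "((\<lambda>x. L * x - G' x) has_real_derivative L - G'' y) (at y)"
      using d2[OF y] by (auto intro!: derivative_eq_intros)
    show "0 \<le> L - G'' y" using b[OF y] by simp
  qed (use x m in auto)
  then show "G x \<le> G m + G' m * (x - m) + L / 2 * (x - m)\<^sup>2"
    by (simp add: power2_eq_square algebra_simps)
qed

lemma state_OUT:
  fixes T :: "nat \<Rightarrow> real"
  assumes T0: "T 0 > 0" and chain: "\<And>k. Suc k < N \<Longrightarrow> T k - \<mu> k + \<Delta> < T (Suc k)"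
    and wb: "\<forall>k<N. \<mu> k - \<Delta> \<le> w k \<omega> \<and> w k \<omega> \<le> \<mu> k + \<Delta>"
    and k: "k < N"
  shows "state (\<lambda>k x. max 0 (T k - x)) w k \<omega> = (if k = 0 then 0 else T (k - 1) - w (k - 1) \<omega>)
       \<and> state (\<lambda>k x. max 0 (T k - x)) w k \<omega> \<le> T k"
  using k
proof (induction k)
  case 0 then show ?case using T0 by simp
next
  case (Suc k)
  then have IH: "state (\<lambda>k x. max 0 (T k - x)) w k \<omega> \<le> T k" by simp
  have "state (\<lambda>k x. max 0 (T k - x)) w (Suc k) \<omega> = T k - w k \<omega>" using IH by simp
  moreover have "T k - w k \<omega> \<le> T (Suc k)"
  proof -
    have "\<mu> k - \<Delta> \<le> w k \<omega>" using wb Suc.prems by auto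
    then show ?thesis using chain[OF Suc.prems] by linarith
  qed
  ultimately show ?case by simp
qed

lemma state_OUT_order:
  fixes T :: "nat \<Rightarrow> real"
  assumes T0: "T 0 > 0" and chain: "\<And>k. Suc k < N \<Longrightarrow> T k - \<mu> k + \<Delta> < T (Suc k)"
    and wb: "\<forall>k<N. \<mu> k - \<Delta> \<le> w k \<omega> \<and> w k \<omega> \<le> \<mu> k + \<Delta>"
    and k: "k < N"
  shows "max 0 (T k - state (\<lambda>k x. max 0 (T k - x)) w k \<omega>) = (if k = 0 then T 0 else T k - T (k - 1) + w (k - 1) \<omega>)"
    and "state (\<lambda>k x. max 0 (T k - x)) w (Suc k) \<omega> = T k - w k \<omega>"
  using state_OUT[where T=T and N=N and w=w and \<mu>=\<mu> and \<Delta>=\<Delta> and \<omega>=\<omega>, OF T0 chain wb k]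
  by (auto split: if_splits)

lemma quad_integral:
  fixes Y :: "'a \<Rightarrow> real" and a b c m :: real
  assumes "prob_space M" "integrable M Y" "integrable M (\<lambda>\<omega>. (Y \<omega> - m)\<^sup>2)" "integral\<^sup>L M Y = m"
  shows "(\<integral>\<omega>. a + b * (Y \<omega> - m) + c * (Y \<omega> - m)\<^sup>2 \<partial>M) = a + c * (\<integral>\<omega>. (Y \<omega> - m)\<^sup>2 \<partial>M)"
proof -
  interpret prob_space M by fact
  have iY: "integrable M (\<lambda>\<omega>. Y \<omega> - m)" using assms(2) by auto
  have "(\<integral>\<omega>. a + b * (Y \<omega> - m) + c * (Y \<omega> - m)\<^sup>2 \<partial>M)
      = (\<integral>\<omega>. a + b * (Y \<omega> - m) \<partial>M) + (\<integral>\<omega>. c * (Y \<omega> - m)\<^sup>2 \<partial>M)"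
  proof (rule Bochner_Integration.integral_add)
    have "integrable M (\<lambda>\<omega>. b * (Y \<omega> - m))" by (rule Bochner_Integration.integrable_mult_right) (rule iY)
    then show "integrable M (\<lambda>\<omega>. a + b * (Y \<omega> - m))" by (rule Bochner_Integration.integrable_add[OF integrable_const])
    show "integrable M (\<lambda>\<omega>. c * (Y \<omega> - m)\<^sup>2)" using assms(3) by auto
  qed
  also have "(\<integral>\<omega>. a + b * (Y \<omega> - m) \<partial>M) = a + b * (\<integral>\<omega>. (Y \<omega> - m) \<partial>M)"
    using iY by (subst Bochner_Integration.integral_add) (auto simp: prob_space)
  also have "(\<integral>\<omega>. (Y \<omega> - m) \<partial>M) = 0" using assms(2,4) by (subst Bochner_Integration.integral_diff) (auto simp: prob_space)
  finally show ?thesis by simp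
qed


lemma order_integral:
  fixes G G' G'' :: "real \<Rightarrow> real" and T \<mu> \<sigma> :: "nat \<Rightarrow> real" and w :: "nat \<Rightarrow> 'a \<Rightarrow> real"
    and M :: "'a measure" and \<Delta> l L mz :: real
  assumes P: "prob_space M"
    and mono: "mono_on {0..} G" and Gnn: "\<And>y. y \<ge> 0 \<Longrightarrow> G y \<ge> 0"
    and d1: "\<And>y. y > 0 \<Longrightarrow> (G has_real_derivative G' y) (at y)"
    and d2: "\<And>y. y > 0 \<Longrightarrow> (G' has_real_derivative G'' y) (at y)"
    and bd: "\<And>y. y > 0 \<Longrightarrow> l \<le> G'' y \<and> G'' y \<le> L"
    and mz: "mz > 0"
    and T0: "T 0 > 0" and chain: "\<And>k. Suc k < N \<Longrightarrow> T k - \<mu> k + \<Delta> < T (Suc k)"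
    and wm: "\<And>k. k < N \<Longrightarrow> w k \<in> borel_measurable M"
    and mean: "\<And>k. k < N \<Longrightarrow> integral\<^sup>L M (w k) = \<mu> k"
    and var: "\<And>k. k < N \<Longrightarrow> integral\<^sup>L M (\<lambda>\<omega>. (w k \<omega> - integral\<^sup>L M (w k))\<^sup>2) = (\<sigma> k)\<^sup>2"
    and good: "AE \<omega> in M. \<forall>k<N. \<mu> k - \<Delta> \<le> w k \<omega> \<and> w k \<omega> \<le> \<mu> k + \<Delta>"
    and k: "k < N"
  shows "\<exists>E. (\<integral>\<^sup>+\<omega>. ennreal (G (max 0 (T k - state (\<lambda>k x. max 0 (T k - x)) w k \<omega>))) \<partial>M) = ennreal E \<and> 0 \<le> E \<and>
     G mz + G' mz * ((if k = 0 then T 0 else T k - T (k-1) + \<mu> (k-1)) - mz)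
       + l/2 * (((if k = 0 then T 0 else T k - T (k-1) + \<mu> (k-1)) - mz)\<^sup>2 + (if k = 0 then 0 else (\<sigma> (k-1))\<^sup>2)) \<le> E \<and>
     E \<le> G mz + G' mz * ((if k = 0 then T 0 else T k - T (k-1) + \<mu> (k-1)) - mz)
       + L/2 * (((if k = 0 then T 0 else T k - T (k-1) + \<mu> (k-1)) - mz)\<^sup>2 + (if k = 0 then 0 else (\<sigma> (k-1))\<^sup>2))"
proof -
  interpret prob_space M by fact
  define mm where "mm = (if k = 0 then T 0 else T k - T (k-1) + \<mu> (k-1))"
  define vv where "vv = (if k = 0 then 0 else (\<sigma> (k-1))\<^sup>2)"
  define g where "g = (\<lambda>\<omega>. if k = 0 then T 0 else T k - T (k-1) + w (k-1) \<omega>)"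
  define B where "B = (if k = 0 then T 0 else T k - T (k-1) + \<mu> (k-1) + \<Delta>)"
  have gm: "g \<in> borel_measurable M"
    unfolding g_def using wm[of "k-1"] k by (cases "k = 0") auto
  have AEg: "AE \<omega> in M. max 0 (T k - state (\<lambda>k x. max 0 (T k - x)) w k \<omega>) = g \<omega> \<and> 0 < g \<omega> \<and> g \<omega> \<le> B"
    using good
  proof eventually_elim
    case (elim \<omega>)
    have 1: "max 0 (T k - state (\<lambda>k x. max 0 (T k - x)) w k \<omega>) = g \<omega>"
      unfolding g_def by (rule state_OUT_order(1)[where T=T and N=N and \<mu>=\<mu> and \<Delta>=\<Delta> and w=w, OF T0 chain elim k])
    have "0 < g \<omega> \<and> g \<omega> \<le> B"
    proof (cases "k = 0")
      case True then show ?thesis using T0 unfolding g_def B_def by simp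
    next
      case False
      then have "Suc (k-1) < N" "Suc (k-1) = k" "k - 1 < N" using k by auto
      then have "T (k-1) - \<mu> (k-1) + \<Delta> < T k" "\<mu> (k-1) - \<Delta> \<le> w (k-1) \<omega>" "w (k-1) \<omega> \<le> \<mu> (k-1) + \<Delta>"
        using chain[of "k-1"] elim by auto
      then show ?thesis using False unfolding g_def B_def by auto
    qed
    then show ?case using 1 by simp
  qed
  define h where "h = (\<lambda>\<omega>. G (max 0 (g \<omega>)))"
  have monoG: "mono (\<lambda>x. G (max 0 x))"
    by (rule monoI) (auto intro!: mono_onD[OF mono])
  have hm: "h \<in> borel_measurable M"
    unfolding h_def using measurable_compose[OF gm borel_measurable_mono[OF monoG]] by (simp add: o_def)
  have hAE: "AE \<omega> in M. 0 \<le> h \<omega> \<and> h \<omega> \<le> G B"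
    using AEg
  proof eventually_elim
    case (elim \<omega>)
    then show ?case unfolding h_def using Gnn[of "g \<omega>"] mono_onD[OF mono, of "g \<omega>" B] by auto
  qed
  have hint: "integrable M h"
    by (rule integrable_const_bound[where B="G B"]) (use hAE hm in auto)
  define E where "E = integral\<^sup>L M h"
  have "(\<integral>\<^sup>+\<omega>. ennreal (G (max 0 (T k - state (\<lambda>k x. max 0 (T k - x)) w k \<omega>))) \<partial>M) = (\<integral>\<^sup>+\<omega>. ennreal (h \<omega>) \<partial>M)"
    by (rule nn_integral_cong_AE) (use AEg in \<open>auto simp: h_def elim!: eventually_mono\<close>)
  also have "\<dots> = ennreal E" unfolding E_def
    by (rule nn_integral_eq_integral[OF hint]) (use hAE in \<open>auto elim!: eventually_mono\<close>)
  finally have E1: "(\<integral>\<^sup>+\<omega>. ennreal (G (max 0 (T k - state (\<lambda>k x. max 0 (T k - x)) w k \<omega>))) \<partial>M) = ennreal E" .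
  have E0: "0 \<le> E" unfolding E_def by (rule integral_nonneg_AE) (use hAE in \<open>auto elim!: eventually_mono\<close>)
  define Q where "Q = (\<lambda>c \<omega>. G mz + G' mz * (g \<omega> - mz) + c / 2 * (g \<omega> - mz)\<^sup>2)"
  have Qint: "integrable M (Q c) \<and> integral\<^sup>L M (Q c) = G mz + G' mz * (mm - mz) + c/2 * ((mm - mz)\<^sup>2 + vv)" for c
  proof (cases "k = 0")
    case True
    then show ?thesis unfolding Q_def g_def mm_def vv_def by (simp add: prob_space)
  next
    case False
    define Y where "Y = w (k-1)"
    define mu where "mu = \<mu> (k-1)"
    define d where "d = T k - T (k-1)"
    have kk: "k - 1 < N" using k by simp
    have Ym: "Y \<in> borel_measurable M" unfolding Y_def using wm[OF kk] .
    have YAE: "AE \<omega> in M. \<bar>Y \<omega> - mu\<bar> \<le> \<Delta>"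
      using good by eventually_elim (use kk in \<open>auto simp: Y_def mu_def\<close>)
    have iY: "integrable M Y"
      by (rule integrable_const_bound[where B="\<bar>mu\<bar> + \<Delta>"]) (use YAE Ym in \<open>auto elim!: eventually_mono\<close>)
    have iY2: "integrable M (\<lambda>\<omega>. (Y \<omega> - mu)\<^sup>2)"
    proof (rule integrable_const_bound[where B="\<Delta>\<^sup>2"])
      show "AE \<omega> in M. norm ((Y \<omega> - mu)\<^sup>2) \<le> \<Delta>\<^sup>2"
        using YAE by eventually_elim (simp, metis abs_ge_zero power2_abs power_mono)
      show "(\<lambda>\<omega>. (Y \<omega> - mu)\<^sup>2) \<in> borel_measurable M" using Ym by measurable
    qed
    have EY: "integral\<^sup>L M Y = mu" unfolding Y_def mu_def using mean[OF kk] .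
    have VY: "integral\<^sup>L M (\<lambda>\<omega>. (Y \<omega> - mu)\<^sup>2) = vv"
      using var[OF kk] mean[OF kk] False unfolding Y_def mu_def vv_def by simp
    define e where "e = d + mu - mz"
    have Qeq: "Q c = (\<lambda>\<omega>. (G mz + G' mz * e + c/2 * e\<^sup>2) + (G' mz + c * e) * (Y \<omega> - mu) + c/2 * (Y \<omega> - mu)\<^sup>2)"
      unfolding Q_def g_def Y_def e_def d_def mu_def using False
      by (auto simp: fun_eq_iff power2_eq_square algebra_simps)
    have mme: "mm - mz = e" unfolding mm_def e_def d_def mu_def using False by simp
    have int1: "integrable M (\<lambda>\<omega>. (G mz + G' mz * e + c/2 * e\<^sup>2) + (G' mz + c * e) * (Y \<omega> - mu) + c/2 * (Y \<omega> - mu)\<^sup>2)"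
    proof -
      have a: "integrable M (\<lambda>\<omega>. Y \<omega> - mu)" using iY by auto
      have b: "integrable M (\<lambda>\<omega>. (G' mz + c * e) * (Y \<omega> - mu))"
        by (rule Bochner_Integration.integrable_mult_right) (rule a)
      have c: "integrable M (\<lambda>\<omega>. c/2 * (Y \<omega> - mu)\<^sup>2)"
        by (rule Bochner_Integration.integrable_mult_right) (rule iY2)
      show ?thesis
        by (rule Bochner_Integration.integrable_add[OF Bochner_Integration.integrable_add[OF integrable_const b] c])
    qed
    show ?thesis
      unfolding Qeq using int1 quad_integral[OF P iY iY2 EY, of "G mz + G' mz * e + c/2 * e\<^sup>2" "G' mz + c * e" "c/2"]
      by (simp add: VY mme algebra_simps)
  qed
  have "integral\<^sup>L M (Q l) \<le> E" unfolding E_def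
  proof (rule integral_mono_AE)
    show "integrable M (Q l)" using Qint by blast
    show "integrable M h" by (rule hint)
    show "AE \<omega> in M. Q l \<omega> \<le> h \<omega>"
      using AEg by eventually_elim (use quad_bounds(1)[OF d1 d2 bd _ mz] in \<open>auto simp: Q_def h_def\<close>)
  qed
  moreover have "E \<le> integral\<^sup>L M (Q L)" unfolding E_def
  proof (rule integral_mono_AE)
    show "integrable M (Q L)" using Qint by blast
    show "integrable M h" by (rule hint)
    show "AE \<omega> in M. h \<omega> \<le> Q L \<omega>"
      using AEg by eventually_elim (use quad_bounds(2)[OF d1 d2 bd _ mz] in \<open>auto simp: Q_def h_def\<close>)
  qed
  ultimately show ?thesis using E1 E0 Qint[of l] Qint[of L] unfolding mm_def vv_def by auto
qed


lemma sum_quad: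
  fixes f vv :: "nat \<Rightarrow> real"
  shows "(\<Sum>k<N. A + B*(f k - m) + c/2*((f k - m)\<^sup>2 + vv k))
    = real N * A + B*((\<Sum>k<N. f k) - real N * m) + c/2*((\<Sum>k<N. (f k - m)\<^sup>2) + (\<Sum>k<N. vv k))"
  by (simp add: sum.distrib sum_distrib_left sum_subtractf algebra_simps)

lemma sum_vv:
  fixes \<sigma> :: "nat \<Rightarrow> real"
  assumes "N \<ge> 1"
  shows "(\<Sum>k<N. (if k = 0 then 0 else (\<sigma> (k-1))\<^sup>2)) = (\<Sum>k<N - 1. (\<sigma> k)\<^sup>2)"
proof -
  obtain n where n: "N = Suc n" using assms by (cases N) auto
  show ?thesis unfolding n sum.lessThan_Suc_shift by simp
qed

lemma sum_v:
  fixes \<mu> :: "nat \<Rightarrow> real"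
  shows "0 < n \<Longrightarrow> (\<Sum>i<n. (\<mu>(0 := \<mu> 0 + \<Delta>)) i) = (\<Sum>i<n. \<mu> i) + \<Delta>"
proof (induction n)
  case (Suc n)
  then show ?case by (cases n) auto
qed simp

theorem theorem2:
  fixes M :: "'a measure" and G G' G'' :: "real \<Rightarrow> real"
    and w :: "nat \<Rightarrow> 'a \<Rightarrow> real" and \<mu> \<sigma> :: "nat \<Rightarrow> real"
    and N :: nat and \<Delta> l L :: real
  assumes "prob_space M"
    and "N \<ge> 1"
    and "strictly_convex_on {0..} G" and "mono_on {0..} G" and "G 0 = 0"
    and "\<And>y. y \<ge> 0 \<Longrightarrow> G y \<ge> 0"
    and "\<And>y. y > 0 \<Longrightarrow> (G has_real_derivative G' y) (at y)"
    and "\<And>y. y > 0 \<Longrightarrow> (G' has_real_derivative G'' y) (at y)"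
    and "0 < l" and "l \<le> L"
    and "\<And>y. y > 0 \<Longrightarrow> l \<le> G'' y \<and> G'' y \<le> L"
    and "\<Delta> \<ge> 0"
    and "\<And>k. k < N \<Longrightarrow> \<mu> k - \<Delta> > 0"
    and "\<And>k. k < N \<Longrightarrow> w k \<in> borel_measurable M"
    and "prob_space.indep_vars M (\<lambda>_. borel) w {..<N}"
    and "\<And>k. k < N \<Longrightarrow> integral\<^sup>L M (w k) = \<mu> k"
    and "\<And>k. k < N \<Longrightarrow> integral\<^sup>L M (\<lambda>\<omega>. (w k \<omega> - integral\<^sup>L M (w k))\<^sup>2) = (\<sigma> k)\<^sup>2"
    and "\<And>k. k < N \<Longrightarrow> rv_support M (w k) = {\<mu> k - \<Delta> .. \<mu> k + \<Delta>}"
  shows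
    "let Mb = (\<Delta> + (\<Sum>k<N. \<mu> k)) / real N;
         u = LS (\<mu>(0 := \<mu> 0 + \<Delta>)) N;
         Su = (\<Sum>k<N. (u k - Mb)\<^sup>2);
         S\<mu> = (\<mu> 0 + \<Delta> - Mb)\<^sup>2 + (\<Sum>k = 1..<N. (\<mu> k - Mb)\<^sup>2);
         V = (\<Sum>k<N - 1. (\<sigma> k)\<^sup>2)
     in enn2ereal (cost M G w N (myopic \<mu> \<Delta>)) - enn2ereal (opt_cost M G w N)
        \<ge> ereal (l / 2 * (S\<mu> + V) - L / 2 * (Su + V))"
proof -
  note A = assms
  interpret prob_space M by fact
  define Mb where "Mb = (\<Delta> + (\<Sum>k<N. \<mu> k)) / real N"
  define v where "v = \<mu>(0 := \<mu> 0 + \<Delta>)"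
  define u where "u = LS v N"
  define Su where "Su = (\<Sum>k<N. (u k - Mb)\<^sup>2)"
  define S\<mu> where "S\<mu> = (\<mu> 0 + \<Delta> - Mb)\<^sup>2 + (\<Sum>k = 1..<N. (\<mu> k - Mb)\<^sup>2)"
  define V where "V = (\<Sum>k<N - 1. (\<sigma> k)\<^sup>2)"
  have Npos: "0 < N" using A(2) by simp
  have sumpos: "0 < \<Delta> + (\<Sum>k<N. \<mu> k)"
  proof -
    have "0 < (\<Sum>k<N. \<mu> k)" using Npos A(12,13) by (intro sum_pos) (auto, smt (verit) A(13))
    then show ?thesis using A(12) by simp
  qed
  have m0: "Mb > 0" unfolding Mb_def using sumpos Npos by simp
  have NMb: "real N * Mb = \<Delta> + (\<Sum>k<N. \<mu> k)" unfolding Mb_def using Npos by simp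
  have good: "AE \<omega> in M. \<forall>k<N. \<mu> k - \<Delta> \<le> w k \<omega> \<and> w k \<omega> \<le> \<mu> k + \<Delta>"
  proof -
    have "AE \<omega> in M. k < N \<longrightarrow> \<mu> k - \<Delta> \<le> w k \<omega> \<and> w k \<omega> \<le> \<mu> k + \<Delta>" for k
    proof (cases "k < N")
      case True
      show ?thesis using support_AE[OF A(1) A(14)[OF True]] A(18)[OF True]
        by (auto elim!: eventually_mono)
    qed simp
    then have "AE \<omega> in M. \<forall>k. k < N \<longrightarrow> \<mu> k - \<Delta> \<le> w k \<omega> \<and> w k \<omega> \<le> \<mu> k + \<Delta>"
      by (subst AE_all_countable) auto
    then show ?thesis by auto
  qed
  have OI: "\<exists>E. (\<integral>\<^sup>+\<omega>. ennreal (G (max 0 (T k - state (\<lambda>k x. max 0 (T k - x)) w k \<omega>))) \<partial>M) = ennreal E \<and> 0 \<le> E \<and>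
     G Mb + G' Mb * ((if k = 0 then T 0 else T k - T (k-1) + \<mu> (k-1)) - Mb)
       + l/2 * (((if k = 0 then T 0 else T k - T (k-1) + \<mu> (k-1)) - Mb)\<^sup>2 + (if k = 0 then 0 else (\<sigma> (k-1))\<^sup>2)) \<le> E \<and>
     E \<le> G Mb + G' Mb * ((if k = 0 then T 0 else T k - T (k-1) + \<mu> (k-1)) - Mb)
       + L/2 * (((if k = 0 then T 0 else T k - T (k-1) + \<mu> (k-1)) - Mb)\<^sup>2 + (if k = 0 then 0 else (\<sigma> (k-1))\<^sup>2))"
    if T0: "T 0 > 0" and chain: "\<And>k. Suc k < N \<Longrightarrow> T k - \<mu> k + \<Delta> < T (Suc k)" and k: "k < N" for T k
    by (rule order_integral[where M=M and G=G and G'=G' and G''=G'' and w=w and \<mu>=\<mu> and \<sigma>=\<sigma> and N=N and \<Delta>=\<Delta> and l=l and L=L and mz=Mb],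
        rule A(1), rule A(4), rule A(6), assumption, rule A(7), assumption, rule A(8), assumption, rule A(11), assumption,
        rule m0, rule T0, rule chain, assumption, rule A(14), assumption, rule A(16), assumption, rule A(17), assumption, rule good, rule k)
  define T1 where "T1 = (\<lambda>k. \<mu> k + \<Delta>)"
  have my: "myopic \<mu> \<Delta> = (\<lambda>k x. max 0 (T1 k - x))"
    unfolding T1_def by (auto simp: fun_eq_iff myopic_def)
  have T10: "T1 0 > 0" unfolding T1_def using A(12) A(13)[of 0] Npos by simp
  have T1c: "T1 k - \<mu> k + \<Delta> < T1 (Suc k)" if "Suc k < N" for k
    unfolding T1_def using A(13)[OF that] by simp
  define E1 where "E1 = (\<lambda>k. enn2real (\<integral>\<^sup>+\<omega>. ennreal (G (max 0 (T1 k - state (\<lambda>k x. max 0 (T1 k - x)) w k \<omega>))) \<partial>M))"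
  have E1: "(\<integral>\<^sup>+\<omega>. ennreal (G (max 0 (T1 k - state (\<lambda>k x. max 0 (T1 k - x)) w k \<omega>))) \<partial>M) = ennreal (E1 k) \<and> 0 \<le> E1 k \<and>
     G Mb + G' Mb * ((if k = 0 then \<mu> 0 + \<Delta> else \<mu> k) - Mb)
       + l/2 * (((if k = 0 then \<mu> 0 + \<Delta> else \<mu> k) - Mb)\<^sup>2 + (if k = 0 then 0 else (\<sigma> (k-1))\<^sup>2)) \<le> E1 k"
    if k: "k < N" for k
  proof -
    have mm: "(if k = 0 then T1 0 else T1 k - T1 (k-1) + \<mu> (k-1)) = (if k = 0 then \<mu> 0 + \<Delta> else \<mu> k)"
      unfolding T1_def by simp
    from OI[OF T10 T1c k] obtain E where
      "(\<integral>\<^sup>+\<omega>. ennreal (G (max 0 (T1 k - state (\<lambda>k x. max 0 (T1 k - x)) w k \<omega>))) \<partial>M) = ennreal E" "0 \<le> E"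
      "G Mb + G' Mb * ((if k = 0 then \<mu> 0 + \<Delta> else \<mu> k) - Mb)
       + l/2 * (((if k = 0 then \<mu> 0 + \<Delta> else \<mu> k) - Mb)\<^sup>2 + (if k = 0 then 0 else (\<sigma> (k-1))\<^sup>2)) \<le> E"
      unfolding mm by blast
    then show ?thesis unfolding E1_def by simp
  qed
  have cost1: "cost M G w N (myopic \<mu> \<Delta>) = ennreal (\<Sum>k<N. E1 k)"
  proof -
    have "cost M G w N (myopic \<mu> \<Delta>) = (\<Sum>k<N. ennreal (E1 k))"
      unfolding cost_def my by (rule sum.cong[OF refl]) (use E1 in auto)
    also have "\<dots> = ennreal (\<Sum>k<N. E1 k)" by (rule sum_ennreal) (use E1 in auto)
    finally show ?thesis .
  qed
  have low1: "real N * G Mb + l/2 * (S\<mu> + V) \<le> (\<Sum>k<N. E1 k)"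
  proof -
    let ?f = "\<lambda>k. if k = 0 then \<mu> 0 + \<Delta> else \<mu> k"
    have "(\<Sum>k<N. G Mb + G' Mb * (?f k - Mb) + l/2 * ((?f k - Mb)\<^sup>2 + (if k = 0 then 0 else (\<sigma> (k-1))\<^sup>2))) \<le> (\<Sum>k<N. E1 k)"
      using E1 by (intro sum_mono) auto
    moreover have "(\<Sum>k<N. ?f k) = \<Delta> + (\<Sum>k<N. \<mu> k)"
    proof -
      obtain n where n: "N = Suc n" using Npos by (cases N) auto
      show ?thesis unfolding n sum.lessThan_Suc_shift by simp
    qed
    moreover have "(\<Sum>k<N. (?f k - Mb)\<^sup>2) = S\<mu>"
    proof -
      obtain n where n: "N = Suc n" using Npos by (cases N) auto
      have sh: "(\<Sum>k = 1..<Suc n. (\<mu> k - Mb)\<^sup>2) = (\<Sum>i<n. (\<mu> (Suc i) - Mb)\<^sup>2)"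
        unfolding One_nat_def sum.shift_bounds_Suc_ivl atLeast0LessThan ..
      show ?thesis unfolding n S\<mu>_def sum.lessThan_Suc_shift sh by simp
    qed
    ultimately show ?thesis unfolding sum_quad sum_vv[OF A(2)] V_def[symmetric] using NMb by simp
  qed
  have vpos: "\<Delta> < v i" if "i < N" for i
    unfolding v_def using A(12) A(13)[OF that] A(13)[of 0] Npos by auto
  have upos: "\<Delta> < u i" if "i < N" for i
    unfolding u_def by (rule LS_lower[OF that vpos])
  define T2 where "T2 = (\<lambda>k. (\<Sum>i<Suc k. u i) - (\<Sum>i<k. \<mu> i))"
  have T20: "T2 0 > 0" unfolding T2_def using upos[OF Npos] A(12) by simp
  have T2c: "T2 k - \<mu> k + \<Delta> < T2 (Suc k)" if "Suc k < N" for k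
    unfolding T2_def using upos[OF that] by simp
  have mm2: "(if k = 0 then T2 0 else T2 k - T2 (k-1) + \<mu> (k-1)) = u k" for k
    unfolding T2_def by (cases k) auto
  define E2 where "E2 = (\<lambda>k. enn2real (\<integral>\<^sup>+\<omega>. ennreal (G (max 0 (T2 k - state (\<lambda>k x. max 0 (T2 k - x)) w k \<omega>))) \<partial>M))"
  have E2: "(\<integral>\<^sup>+\<omega>. ennreal (G (max 0 (T2 k - state (\<lambda>k x. max 0 (T2 k - x)) w k \<omega>))) \<partial>M) = ennreal (E2 k) \<and> 0 \<le> E2 k \<and>
     E2 k \<le> G Mb + G' Mb * (u k - Mb) + L/2 * ((u k - Mb)\<^sup>2 + (if k = 0 then 0 else (\<sigma> (k-1))\<^sup>2))"
    if k: "k < N" for k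
  proof -
    from OI[OF T20 T2c k] obtain E where
      "(\<integral>\<^sup>+\<omega>. ennreal (G (max 0 (T2 k - state (\<lambda>k x. max 0 (T2 k - x)) w k \<omega>))) \<partial>M) = ennreal E" "0 \<le> E"
      "E \<le> G Mb + G' Mb * (u k - Mb) + L/2 * ((u k - Mb)\<^sup>2 + (if k = 0 then 0 else (\<sigma> (k-1))\<^sup>2))"
      unfolding mm2 by blast
    then show ?thesis unfolding E2_def by simp
  qed
  have cost2: "cost M G w N (\<lambda>k x. max 0 (T2 k - x)) = ennreal (\<Sum>k<N. E2 k)"
  proof -
    have "cost M G w N (\<lambda>k x. max 0 (T2 k - x)) = (\<Sum>k<N. ennreal (E2 k))"
      unfolding cost_def by (rule sum.cong[OF refl]) (use E2 in auto)
    also have "\<dots> = ennreal (\<Sum>k<N. E2 k)" by (rule sum_ennreal) (use E2 in auto)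
    finally show ?thesis .
  qed
  have up2: "(\<Sum>k<N. E2 k) \<le> real N * G Mb + L/2 * (Su + V)"
  proof -
    have "(\<Sum>k<N. E2 k) \<le> (\<Sum>k<N. G Mb + G' Mb * (u k - Mb) + L/2 * ((u k - Mb)\<^sup>2 + (if k = 0 then 0 else (\<sigma> (k-1))\<^sup>2)))"
      using E2 by (intro sum_mono) auto
    moreover have "(\<Sum>k<N. u k) = \<Delta> + (\<Sum>k<N. \<mu> k)"
      unfolding u_def LS_total v_def using sum_v[OF Npos] by simp
    ultimately show ?thesis unfolding sum_quad sum_vv[OF A(2)] V_def[symmetric] Su_def[symmetric] using NMb by simp
  qed
  have adm: "admissible M w N (\<lambda>k x. max 0 (T2 k - x))"
    unfolding admissible_def is_policy_def
  proof safe
    fix k assume "k < N"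
    show "(\<lambda>x. max 0 (T2 k - x)) \<in> borel_measurable borel" by measurable
  next
    fix k x show "0 \<le> max 0 (T2 k - x)" by simp
  next
    fix k assume k: "k \<in> {1..N}"
    then obtain j where j: "k = Suc j" "j < N" by (cases k) auto
    have pre: "(\<Sum>i<Suc j. v i) \<le> (\<Sum>i<Suc j. u i)" unfolding u_def by (rule LS_prefix) (use j in simp)
    have sv: "(\<Sum>i<Suc j. v i) = (\<Sum>i<Suc j. \<mu> i) + \<Delta>" unfolding v_def by (rule sum_v) simp
    show "AE \<omega> in M. 0 \<le> state (\<lambda>k x. max 0 (T2 k - x)) w k \<omega>"
      using good
    proof eventually_elim
      case (elim \<omega>)
      have "state (\<lambda>k x. max 0 (T2 k - x)) w k \<omega> = T2 j - w j \<omega>"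
        unfolding j(1) by (rule state_OUT_order(2)[where T=T2 and N=N and \<mu>=\<mu> and \<Delta>=\<Delta> and w=w, OF T20 T2c elim j(2)])
      moreover have "w j \<omega> \<le> \<mu> j + \<Delta>" using elim j by auto
      ultimately show ?case using pre sv unfolding T2_def by simp
    qed
  qed
  have opt: "opt_cost M G w N \<le> ennreal (\<Sum>k<N. E2 k)"
    unfolding opt_cost_def cost2[symmetric] by (rule INF_lower) (use adm in simp)
  have C2nn: "0 \<le> (\<Sum>k<N. E2 k)" by (rule sum_nonneg) (use E2 in auto)
  have C1nn: "0 \<le> (\<Sum>k<N. E1 k)" by (rule sum_nonneg) (use E1 in auto)
  obtain r where r: "enn2ereal (opt_cost M G w N) = ereal r" "r \<le> (\<Sum>k<N. E2 k)"
  proof -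
    have "enn2ereal (opt_cost M G w N) \<le> enn2ereal (ennreal (\<Sum>k<N. E2 k))"
      using opt by (simp add: less_eq_ennreal.rep_eq)
    then have le: "enn2ereal (opt_cost M G w N) \<le> ereal (\<Sum>k<N. E2 k)" using C2nn by simp
    have ge: "0 \<le> enn2ereal (opt_cost M G w N)" by simp
    show ?thesis
      using le ge that[of "real_of_ereal (enn2ereal (opt_cost M G w N))"]
      by (cases "enn2ereal (opt_cost M G w N)") auto
  qed
  have main: "l / 2 * (S\<mu> + V) - L / 2 * (Su + V) \<le> (\<Sum>k<N. E1 k) - r"
    using low1 up2 r(2) by simp
  show ?thesis
    unfolding Let_def Mb_def[symmetric] v_def[symmetric] u_def[symmetric] Su_def[symmetric] S\<mu>_def[symmetric] V_def[symmetric]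
    using main C1nn by (simp add: cost1 r(1))
qed

end
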